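(* Let $k\ge1$, let $G$ and $H$ be simple graphs on at most $n$ vertices, and let $f_k(n)=2k\cdot4^{n^{2k}}$. Then $\hom(F,G)=\hom(F,H)$ for every underlying graph $F$ of a member of $\mathcal P_k$ if and only if $\hom(F,G)=\hom(F,H)$ for every underlying graph $F$ of a member of $\mathcal P_k$ having at most $f_k(n)$ vertices.
   Context: $\hom(F,G)$ is the number of homomorphisms $F\to G$. A $(k,k)$-bilabelled graph is $\boldsymbol F=(F,\boldsymbol u,\boldsymbol v)$, $\boldsymbol u,\boldsymbol v\in V(F)^k$, with underlying graph $F$. Series composition $\boldsymbol F\cdot\boldsymbol F'$: disjoint union with $v_i$ identified with $u'_i$, multiple edges removed, labels $(\boldsymbol u,\boldsymbol v')$. Parallel composition $\boldsymbol F\odot\boldsymbol F'$: identify $u_i$ with $u'_i$, $v_i$ with $v'_i$, multiple edges removed. For $\sigma\in\mathfrak S_{2k}$, $\boldsymbol F^\sigma$ has in-labels $(w_{\sigma(1)},\dots,w_{\sigma(k)})$, out-labels $(w_{\sigma(k+1)},\dots,w_{\sigma(2k)})$, $\boldsymbol w=\boldsymbol u\boldsymbol v$. $\mathscr C_k$ = cyclic group of rotations of $(1,\dots,k,2k,\dots,k+1)$. Bilabelled minors: via edge contraction, edge deletion, deletion of unlabelled vertices. $\boldsymbol C_k$: vertices $[2k]$, in-labels $(1,\dots,k)$, out-labels $(k+1,\dots,2k)$, edges $\{i,i+1\}$ ($i\in[2k]\setminus\{k,2k\}$), $\{1,k+1\},\{k,2k\}$; $\boldsymbol M_k$: same vertices/labels,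 edges $\{i,i+k\}$. $\mathcal Q_k^P,\mathcal Q_k^S$ = bilabelled minors of $\boldsymbol C_k,\boldsymbol M_k$; $\mathcal Q_k$ their union. $\mathcal P_k$ = smallest class containing $\mathcal Q_k$, closed under series composition, $\boldsymbol F\mapsto\boldsymbol F\odot\boldsymbol Q$ ($\boldsymbol Q\in\mathcal Q_k^P$), and $\boldsymbol F\mapsto\boldsymbol F^\sigma$ ($\sigma\in\mathscr C_k$). *)

theory Defs
  imports "HOL-Library.FuncSet"
begin

text \<open>A graph: vertex set and edge set; an edge is a set of one (loop) or two vertices.\<close>
record 'a sgraph =
  gverts :: "'a set"
  gedges :: "'a set set"

definition simple_graph :: "'a sgraph \<Rightarrow> bool" where
  "simple_graph G \<longleftrightarrow> finite (gverts G) \<and>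
     (\<forall>e\<in>gedges G. e \<subseteq> gverts G \<and> card e = 2)"

definition hom :: "'b sgraph \<Rightarrow> 'a sgraph \<Rightarrow> nat" where
  "hom F G = card {h \<in> gverts F \<rightarrow>\<^sub>E gverts G. \<forall>e\<in>gedges F. h ` e \<in> gedges G}"

record bgraph =
  bverts :: "nat set"
  bedges :: "nat set set"
  inl :: "nat list"
  outl :: "nat list"

definition ug :: "bgraph \<Rightarrow> nat sgraph" where
  "ug F = \<lparr>gverts = bverts F, gedges = bedges F\<rparr>"

definition bmap :: "(nat \<Rightarrow> nat) \<Rightarrow> bgraph \<Rightarrow> bgraph" where
  "bmap q F = \<lparr>bverts = q ` bverts F, bedges = (\<lambda>e. q ` e) ` bedges F,
               inl = map q (inl F), outl = map q (outl F)\<rparr>"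

text \<open>Identify vertices according to the equivalence relation generated by the pairs P;
  every vertex is sent to the least element of its class (multiple edges disappear
  since edges form a set).\<close>
definition glue :: "(nat \<times> nat) set \<Rightarrow> bgraph \<Rightarrow> bgraph" where
  "glue P F = bmap (\<lambda>x. Min {y. (x, y) \<in> (P \<union> P\<inverse>)\<^sup>*}) F"

definition ev :: "nat \<Rightarrow> nat" where "ev x = 2 * x"
definition od :: "nat \<Rightarrow> nat" where "od x = 2 * x + 1"

definition series :: "bgraph \<Rightarrow> bgraph \<Rightarrow> bgraph" where
  "series F F' = glue (set (zip (map ev (outl F)) (map od (inl F'))))
     \<lparr>bverts = ev ` bverts F \<union> od ` bverts F',
      bedges = (\<lambda>e. ev ` e) ` bedges F \<union> (\<lambda>e. od ` e) ` bedges F',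
      inl = map ev (inl F), outl = map od (outl F')\<rparr>"

definition parallel :: "bgraph \<Rightarrow> bgraph \<Rightarrow> bgraph" where
  "parallel F F' = glue (set (zip (map ev (inl F)) (map od (inl F'))) \<union>
                         set (zip (map ev (outl F)) (map od (outl F'))))
     \<lparr>bverts = ev ` bverts F \<union> od ` bverts F',
      bedges = (\<lambda>e. ev ` e) ` bedges F \<union> (\<lambda>e. od ` e) ` bedges F',
      inl = map ev (inl F), outl = map ev (outl F)\<rparr>"

text \<open>Relabelling by a permutation sigma of the 2k label positions (0-based):
  with w = u v, in-labels become (w_sigma(0),...,w_sigma(k-1)) and out-labels
  (w_sigma(k),...,w_sigma(2k-1)).\<close>
definition perm_labels :: "nat \<Rightarrow> (nat \<Rightarrow> nat) \<Rightarrow> bgraph \<Rightarrow> bgraph" where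
  "perm_labels k \<sigma> F = (let w = inl F @ outl F in
     F\<lparr>inl := map (\<lambda>i. w ! \<sigma> i) [0..<k], outl := map (\<lambda>i. w ! \<sigma> i) [k..<2*k]\<rparr>)"

text \<open>The cyclic order (1,...,k,2k,...,k+1) in 0-based form: cyc k = [0..k-1, 2k-1, ..., k];
  position of label index i in it; rotation by r steps.\<close>
definition cyc :: "nat \<Rightarrow> nat list" where
  "cyc k = [0..<k] @ rev [k..<2*k]"

definition cyc_pos :: "nat \<Rightarrow> nat \<Rightarrow> nat" where
  "cyc_pos k i = (if i < k then i else 3 * k - 1 - i)"

definition rot :: "nat \<Rightarrow> nat \<Rightarrow> nat \<Rightarrow> nat" where
  "rot k r i = cyc k ! ((cyc_pos k i + r) mod (2 * k))"

definition Ck_group :: "nat \<Rightarrow> (nat \<Rightarrow> nat) set" where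
  "Ck_group k = {rot k r | r. r < 2 * k}"

inductive minor_step :: "bgraph \<Rightarrow> bgraph \<Rightarrow> bool" where
  edge_del: "e \<in> bedges F \<Longrightarrow> minor_step F (F\<lparr>bedges := bedges F - {e}\<rparr>)"
| edge_contr: "{a, b} \<in> bedges F \<Longrightarrow> a \<noteq> b \<Longrightarrow>
     minor_step F (bmap (\<lambda>x. if x = b then a else x) (F\<lparr>bedges := bedges F - {{a, b}}\<rparr>))"
| vert_del: "x \<in> bverts F \<Longrightarrow> x \<notin> set (inl F) \<Longrightarrow> x \<notin> set (outl F) \<Longrightarrow>
     minor_step F (F\<lparr>bverts := bverts F - {x}, bedges := {e \<in> bedges F. x \<notin> e}\<rparr>)"

definition bminor :: "bgraph \<Rightarrow> bgraph \<Rightarrow> bool" where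
  "bminor F M \<longleftrightarrow> minor_step\<^sup>*\<^sup>* M F"

definition Ck :: "nat \<Rightarrow> bgraph" where
  "Ck k = \<lparr>bverts = {1..2*k},
           bedges = {{i, i+1} | i. i \<in> {1..2*k} - {k, 2*k}} \<union> {{1, k+1}, {k, 2*k}},
           inl = [1..<k+1], outl = [k+1..<2*k+1]\<rparr>"

definition Mk :: "nat \<Rightarrow> bgraph" where
  "Mk k = \<lparr>bverts = {1..2*k},
           bedges = {{i, i+k} | i. i \<in> {1..k}},
           inl = [1..<k+1], outl = [k+1..<2*k+1]\<rparr>"

definition QP :: "nat \<Rightarrow> bgraph set" where
  "QP k = {F. bminor F (Ck k)}"

definition QS :: "nat \<Rightarrow> bgraph set" where
  "QS k = {F. bminor F (Mk k)}"

definition Q :: "nat \<Rightarrow> bgraph set" where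
  "Q k = QP k \<union> QS k"

inductive_set P :: "nat \<Rightarrow> bgraph set" for k :: nat where
  base: "F \<in> Q k \<Longrightarrow> F \<in> P k"
| ser: "F \<in> P k \<Longrightarrow> F' \<in> P k \<Longrightarrow> series F F' \<in> P k"
| par: "F \<in> P k \<Longrightarrow> R \<in> QP k \<Longrightarrow> parallel F R \<in> P k"
| perm: "F \<in> P k \<Longrightarrow> \<sigma> \<in> Ck_group k \<Longrightarrow> perm_labels k \<sigma> F \<in> P k"

definition fk :: "nat \<Rightarrow> nat \<Rightarrow> nat" where
  "fk k n = 2 * k * 4 ^ (n ^ (2 * k))"

end

theory Submission
  imports Defs "HOL-Library.Function_Algebras" Complex_Main
begin

definition homs :: "'a sgraph \<Rightarrow> bgraph \<Rightarrow> (nat \<Rightarrow> 'a) set" where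
  "homs G F = {h \<in> bverts F \<rightarrow>\<^sub>E gverts G. \<forall>e\<in>bedges F. h ` e \<in> gedges G}"

definition lab :: "bgraph \<Rightarrow> nat list" where "lab F = inl F @ outl F"

definition homv :: "'a sgraph \<Rightarrow> bgraph \<Rightarrow> 'a list \<Rightarrow> nat" where
  "homv G F x = card {h \<in> homs G F. map h (lab F) = x}"

definition TT :: "nat \<Rightarrow> 'a sgraph \<Rightarrow> 'a list set" where
  "TT k G = {x. set x \<subseteq> gverts G \<and> length x = 2*k}"

definition bwf :: "nat \<Rightarrow> bgraph \<Rightarrow> bool" where
  "bwf k F \<longleftrightarrow> finite (bverts F) \<and> (\<forall>e\<in>bedges F. e \<subseteq> bverts F) \<and>
     length (inl F) = k \<and> length (outl F) = k \<and> set (inl F) \<subseteq> bverts F \<and> set (outl F) \<subseteq> bverts F"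

lemma finite_homs: "finite (bverts F) \<Longrightarrow> finite (gverts G) \<Longrightarrow> finite (homs G F)"
  unfolding homs_def by (rule finite_subset[OF _ finite_PiE]) auto

lemma card_fiber:
  assumes "finite A" "f ` A \<subseteq> T" "finite T"
  shows "card {a\<in>A. Pr (f a)} = (\<Sum>t\<in>T. if Pr t then card {a\<in>A. f a = t} else 0)"
proof -
  have "{a\<in>A. Pr (f a)} = (\<Union>t\<in>{t\<in>T. Pr t}. {a\<in>A. f a = t})" using assms by auto
  then have "card {a\<in>A. Pr (f a)} = (\<Sum>t\<in>{t\<in>T. Pr t}. card {a\<in>A. f a = t})"
    using assms by (simp only:) (rule card_UN_disjoint, auto)
  also have "\<dots> = (\<Sum>t\<in>T. if Pr t then card {a\<in>A. f a = t} else 0)"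
    using assms by (simp add: sum.inter_filter)
  finally show ?thesis .
qed

lemma card_fiber2:
  assumes "finite A1" "finite A2" "f1 ` A1 \<subseteq> T1" "f2 ` A2 \<subseteq> T2" "finite T1" "finite T2"
  shows "card {p\<in>A1 \<times> A2. Qr (f1 (fst p)) (f2 (snd p))} =
    (\<Sum>t1\<in>T1. \<Sum>t2\<in>T2. if Qr t1 t2 then card {a\<in>A1. f1 a = t1} * card {b\<in>A2. f2 b = t2} else 0)"
proof -
  let ?f = "\<lambda>p. (f1 (fst p), f2 (snd p))"
  have "card {p\<in>A1 \<times> A2. (case_prod Qr) (?f p)} =
     (\<Sum>t\<in>T1\<times>T2. if case_prod Qr t then card {p\<in>A1\<times>A2. ?f p = t} else 0)"
    by (rule card_fiber) (use assms in auto)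
  also have "\<dots> = (\<Sum>t\<in>T1\<times>T2. if case_prod Qr t then card {a\<in>A1. f1 a = fst t} * card {b\<in>A2. f2 b = snd t} else 0)"
  proof (rule sum.cong)
    fix t assume "t \<in> T1 \<times> T2"
    have "{p\<in>A1\<times>A2. ?f p = t} = {a\<in>A1. f1 a = fst t} \<times> {b\<in>A2. f2 b = snd t}" by (cases t) auto
    then show "(if case_prod Qr t then card {p\<in>A1\<times>A2. ?f p = t} else 0) =
       (if case_prod Qr t then card {a\<in>A1. f1 a = fst t} * card {b\<in>A2. f2 b = snd t} else 0)"
      by (simp add: card_cartesian_product)
  qed simp
  also have "\<dots> = (\<Sum>t1\<in>T1. \<Sum>t2\<in>T2. if Qr t1 t2 then card {a\<in>A1. f1 a = t1} * card {b\<in>A2. f2 b = t2} else 0)"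
    by (subst sum.cartesian_product) (rule sum.cong, auto)
  finally show ?thesis by simp
qed


lemma card_filter_bij:
  assumes "bij_betw \<Phi> A B"
  shows "card {a\<in>A. C (\<Phi> a)} = card {b\<in>B. C b}"
proof -
  have "{b\<in>B. C b} = \<Phi> ` {a\<in>A. C (\<Phi> a)}" using assms by (auto simp: bij_betw_def)
  moreover have "inj_on \<Phi> {a\<in>A. C (\<Phi> a)}" using assms by (auto simp: bij_betw_def intro: inj_on_subset)
  ultimately show ?thesis by (simp add: card_image)
qed

definition RR :: "(nat \<times> nat) set \<Rightarrow> (nat \<times> nat) set" where "RR Ps = (Ps \<union> Ps\<inverse>)\<^sup>*"
definition qq :: "(nat \<times> nat) set \<Rightarrow> nat \<Rightarrow> nat" where "qq Ps x = Min {y. (x, y) \<in> RR Ps}"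

lemma glue_eq: "glue Ps F = bmap (qq Ps) F"
  unfolding glue_def qq_def RR_def ..

lemma RR_field: "(x, y) \<in> RR Ps \<Longrightarrow> y = x \<or> y \<in> fst ` Ps \<union> snd ` Ps"
  unfolding RR_def
  by (induction rule: rtrancl_induct) force+

lemma RR_sym: "(x, y) \<in> RR Ps \<Longrightarrow> (y, x) \<in> RR Ps"
proof -
  have "sym (RR Ps)" unfolding RR_def by (rule sym_rtrancl) (auto simp: sym_def)
  then show "(x, y) \<in> RR Ps \<Longrightarrow> (y, x) \<in> RR Ps" by (auto simp: sym_def)
qed

lemma RR_trans: "(x, y) \<in> RR Ps \<Longrightarrow> (y, z) \<in> RR Ps \<Longrightarrow> (x, z) \<in> RR Ps"
  unfolding RR_def by (rule rtrancl_trans)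

lemma RR_refl: "(x, x) \<in> RR Ps" unfolding RR_def by simp

lemma qq_in: assumes "finite Ps" shows "(x, qq Ps x) \<in> RR Ps"
proof -
  have sub: "{y. (x, y) \<in> RR Ps} \<subseteq> insert x (fst ` Ps \<union> snd ` Ps)" using RR_field by blast
  have fin2: "finite (insert x (fst ` Ps \<union> snd ` Ps))" using assms by simp
  have "finite {y. (x, y) \<in> RR Ps}" by (rule finite_subset[OF sub fin2])
  moreover have "{y. (x, y) \<in> RR Ps} \<noteq> {}" using RR_refl by blast
  ultimately have "Min {y. (x, y) \<in> RR Ps} \<in> {y. (x, y) \<in> RR Ps}" by (rule Min_in)
  then show ?thesis unfolding qq_def by simp
qed

lemma qq_eq: assumes "(x, y) \<in> RR Ps" shows "qq Ps x = qq Ps y"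
proof -
  have "{z. (x, z) \<in> RR Ps} = {z. (y, z) \<in> RR Ps}"
    using assms RR_sym RR_trans by blast
  then show ?thesis unfolding qq_def by simp
qed

lemma qq_eqD: assumes "finite Ps" "qq Ps x = qq Ps y" shows "(x, y) \<in> RR Ps"
  using qq_in[OF assms(1), of x] qq_in[OF assms(1), of y] assms(2) RR_sym RR_trans by metis

lemma RR_const:
  assumes "(x, y) \<in> RR Ps" "x \<in> V" "fst ` Ps \<subseteq> V" "snd ` Ps \<subseteq> V" "\<forall>(a,b)\<in>Ps. h a = h b"
  shows "y \<in> V \<and> h x = h y"
  using assms(1) unfolding RR_def
proof (induction rule: rtrancl_induct)
  case base then show ?case using assms by simp
next
  case (step y z)
  from step(2) show ?case
  proof
    assume yz: "(y, z) \<in> Ps"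
    then have "z \<in> V" using assms(4) by force
    moreover have "h y = h z" using yz assms(5) by blast
    ultimately show ?thesis using step(3) by simp
  next
    assume yz: "(y, z) \<in> Ps\<inverse>"
    then have "z \<in> V" using assms(3) by force
    moreover have "h z = h y" using yz assms(5) by blast
    ultimately show ?thesis using step(3) by simp
  qed
qed

lemma bmap_simps[simp]: "bverts (bmap q F) = q ` bverts F" "bedges (bmap q F) = (\<lambda>e. q ` e) ` bedges F"
   "inl (bmap q F) = map q (inl F)" "outl (bmap q F) = map q (outl F)"
  by (simp_all add: bmap_def)

lemma lab_bmap[simp]: "lab (bmap q F) = map q (lab F)" by (simp add: lab_def)

lemma glue_bij:
  assumes fin: "finite Ps" and PV: "fst ` Ps \<subseteq> bverts F" "snd ` Ps \<subseteq> bverts F"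
    and EV: "\<forall>e\<in>bedges F. e \<subseteq> bverts F"
  shows "bij_betw (\<lambda>h'. restrict (h' \<circ> qq Ps) (bverts F)) (homs G (glue Ps F))
            {h\<in>homs G F. \<forall>(a,b)\<in>Ps. h a = h b}"
proof -
  let ?q = "qq Ps" and ?V = "bverts F"
  let ?\<Phi> = "\<lambda>h'. restrict (h' \<circ> qq Ps) (bverts F)"
  have A: "?\<Phi> h' \<in> {h\<in>homs G F. \<forall>(a,b)\<in>Ps. h a = h b}" if h': "h' \<in> homs G (glue Ps F)" for h'
  proof -
    have "?\<Phi> h' \<in> ?V \<rightarrow>\<^sub>E gverts G" using h' by (auto simp: homs_def glue_eq PiE_def Pi_def)
    moreover have "?\<Phi> h' ` e \<in> gedges G" if e: "e \<in> bedges F" for e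
    proof -
      have "?\<Phi> h' ` e = h' ` (?q ` e)" using EV e by (force simp: restrict_def)
      then show ?thesis using h' e by (auto simp: homs_def glue_eq)
    qed
    moreover have "?\<Phi> h' a = ?\<Phi> h' b" if "(a,b) \<in> Ps" for a b
    proof -
      have "(a,b) \<in> RR Ps" using that unfolding RR_def by auto
      then have "?q a = ?q b" by (rule qq_eq)
      then show ?thesis using that PV by force
    qed
    ultimately show ?thesis by (auto simp: homs_def)
  qed
  have I: "inj_on ?\<Phi> (homs G (glue Ps F))"
  proof (rule inj_onI)
    fix h1 h2 assume h: "h1 \<in> homs G (glue Ps F)" "h2 \<in> homs G (glue Ps F)" "?\<Phi> h1 = ?\<Phi> h2"
    show "h1 = h2"
    proof
      fix y show "h1 y = h2 y"
      proof (cases "y \<in> ?q ` ?V")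
        case True
        then obtain v where v: "v \<in> ?V" "y = ?q v" by auto
        have "?\<Phi> h1 v = ?\<Phi> h2 v" using h(3) by simp
        then show ?thesis using v by simp
      next
        case False
        then show ?thesis using h(1,2) by (auto simp: homs_def glue_eq PiE_def extensional_def)
      qed
    qed
  qed
  have S: "h \<in> ?\<Phi> ` homs G (glue Ps F)" if h: "h \<in> homs G F" "\<forall>(a,b)\<in>Ps. h a = h b" for h
  proof -
    define h' where "h' = restrict (\<lambda>y. h (SOME v. v \<in> ?V \<and> ?q v = y)) (?q ` ?V)"
    have key: "h' (?q v) = h v" if v: "v \<in> ?V" for v
    proof -
      have ex: "\<exists>w. w \<in> ?V \<and> ?q w = ?q v" using v by blast
      define w where "w = (SOME w. w \<in> ?V \<and> ?q w = ?q v)"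
      have w: "w \<in> ?V" "?q w = ?q v" using someI_ex[OF ex] unfolding w_def by auto
      have "(w, v) \<in> RR Ps" using qq_eqD[OF fin w(2)] .
      then have "h w = h v" using RR_const[OF _ w(1) PV h(2)] by blast
      then show ?thesis unfolding h'_def w_def using v by simp
    qed
    have "h' \<in> homs G (glue Ps F)"
    proof -
      have "h' \<in> ?q ` ?V \<rightarrow>\<^sub>E gverts G"
        using h(1) key by (auto simp: h'_def homs_def PiE_def Pi_def)
      moreover have "h' ` (?q ` e) \<in> gedges G" if e: "e \<in> bedges F" for e
      proof -
        have "h' ` (?q ` e) = h ` e" using EV e key by (force simp: image_image)
        then show ?thesis using h(1) e by (auto simp: homs_def)
      qed
      ultimately show ?thesis by (auto simp: homs_def glue_eq)
    qed
    moreover have "?\<Phi> h' = h"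
    proof
      fix v show "?\<Phi> h' v = h v"
        using key h(1) by (cases "v \<in> ?V") (auto simp: homs_def PiE_def extensional_def)
    qed
    ultimately show ?thesis by force
  qed
  show ?thesis unfolding bij_betw_def using A I S by blast
qed

lemma glue_homv:
  assumes fin: "finite Ps" and PV: "fst ` Ps \<subseteq> bverts F" "snd ` Ps \<subseteq> bverts F"
    and EV: "\<forall>e\<in>bedges F. e \<subseteq> bverts F" and LV: "set (lab F) \<subseteq> bverts F"
  shows "homv G (glue Ps F) x = card {h\<in>homs G F. (\<forall>(a,b)\<in>Ps. h a = h b) \<and> map h (lab F) = x}"
proof -
  have "homv G (glue Ps F) x = card {h'\<in>homs G (glue Ps F). map (restrict (h' \<circ> qq Ps) (bverts F)) (lab F) = x}"
    unfolding homv_def using LV by (intro arg_cong[where f=card]) (auto simp: glue_eq)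
  also have "\<dots> = card {h\<in>{h\<in>homs G F. \<forall>(a,b)\<in>Ps. h a = h b}. map h (lab F) = x}"
    by (rule card_filter_bij[OF glue_bij[OF assms(1-4)]])
  finally show ?thesis by (simp add: conj_ac)
qed


definition du :: "bgraph \<Rightarrow> bgraph \<Rightarrow> nat list \<Rightarrow> nat list \<Rightarrow> bgraph" where
  "du F F' Il Ol = \<lparr>bverts = ev ` bverts F \<union> od ` bverts F',
      bedges = (\<lambda>e. ev ` e) ` bedges F \<union> (\<lambda>e. od ` e) ` bedges F',
      inl = Il, outl = Ol\<rparr>"

lemma series_du: "series F F' = glue (set (zip (map ev (outl F)) (map od (inl F'))))
   (du F F' (map ev (inl F)) (map od (outl F')))"
  unfolding series_def du_def ..

lemma parallel_du: "parallel F F' = glue (set (zip (map ev (inl F)) (map od (inl F'))) \<union>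
                         set (zip (map ev (outl F)) (map od (outl F'))))
   (du F F' (map ev (inl F)) (map ev (outl F)))"
  unfolding parallel_def du_def ..

lemma du_simps[simp]: "bverts (du F F' Il Ol) = ev ` bverts F \<union> od ` bverts F'"
  "bedges (du F F' Il Ol) = (\<lambda>e. ev ` e) ` bedges F \<union> (\<lambda>e. od ` e) ` bedges F'"
  "inl (du F F' Il Ol) = Il" "outl (du F F' Il Ol) = Ol"
  by (simp_all add: du_def)

lemma ev_div[simp]: "ev a div 2 = a" and od_div[simp]: "od a div 2 = a"
  and ev_od[simp]: "ev a \<noteq> od b" "od b \<noteq> ev a"
  and ev_inj[simp]: "ev a = ev b \<longleftrightarrow> a = b" and od_inj[simp]: "od a = od b \<longleftrightarrow> a = b"
  unfolding ev_def od_def by presburger+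

definition Psi :: "nat set \<Rightarrow> nat set \<Rightarrow> (nat \<Rightarrow> 'a) \<times> (nat \<Rightarrow> 'a) \<Rightarrow> nat \<Rightarrow> 'a" where
  "Psi V1 V2 p v = (if v \<in> ev ` V1 then fst p (v div 2) else if v \<in> od ` V2 then snd p (v div 2) else undefined)"

lemma Psi_ev[simp]: "a \<in> V1 \<Longrightarrow> Psi V1 V2 p (ev a) = fst p a"
  by (simp add: Psi_def)
lemma Psi_od[simp]: "b \<in> V2 \<Longrightarrow> Psi V1 V2 p (od b) = snd p b"
  by (auto simp: Psi_def)

lemma du_bij:
  assumes EV1: "\<forall>e\<in>bedges F. e \<subseteq> bverts F" and EV2: "\<forall>e\<in>bedges F'. e \<subseteq> bverts F'"
  shows "bij_betw (Psi (bverts F) (bverts F')) (homs G F \<times> homs G F') (homs G (du F F' Il Ol))"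
proof -
  let ?V1 = "bverts F" and ?V2 = "bverts F'"
  let ?\<Psi> = "Psi ?V1 ?V2"
  have A: "?\<Psi> p \<in> homs G (du F F' Il Ol)" if p: "p \<in> homs G F \<times> homs G F'" for p
  proof -
    obtain h1 h2 where p12: "p = (h1, h2)" "h1 \<in> homs G F" "h2 \<in> homs G F'" using p by auto
    have "?\<Psi> p \<in> bverts (du F F' Il Ol) \<rightarrow>\<^sub>E gverts G"
      using p12 by (auto simp: homs_def PiE_def Pi_def extensional_def Psi_def)
    moreover have "?\<Psi> p ` (ev ` e) \<in> gedges G" if "e \<in> bedges F" for e
    proof -
      have "?\<Psi> p ` (ev ` e) = h1 ` e" using EV1 that p12 by (force simp: image_image)
      then show ?thesis using p12 that by (auto simp: homs_def)
    qed
    moreover have "?\<Psi> p ` (od ` e) \<in> gedges G" if "e \<in> bedges F'" for e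
    proof -
      have "?\<Psi> p ` (od ` e) = h2 ` e" using EV2 that p12 by (force simp: image_image)
      then show ?thesis using p12 that by (auto simp: homs_def)
    qed
    ultimately show ?thesis by (auto simp: homs_def)
  qed
  have I: "inj_on ?\<Psi> (homs G F \<times> homs G F')"
  proof (rule inj_onI)
    fix p p' assume pp: "p \<in> homs G F \<times> homs G F'" "p' \<in> homs G F \<times> homs G F'" "?\<Psi> p = ?\<Psi> p'"
    have 1: "fst p = fst p'"
    proof
      fix a show "fst p a = fst p' a"
      proof (cases "a \<in> ?V1")
        case True then show ?thesis using fun_cong[OF pp(3), of "ev a"] by simp
      next
        case False then show ?thesis using pp(1,2) by (auto simp: homs_def PiE_def extensional_def)
      qed
    qed
    have 2: "snd p = snd p'"
    proof
      fix a show "snd p a = snd p' a"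
      proof (cases "a \<in> ?V2")
        case True then show ?thesis using fun_cong[OF pp(3), of "od a"] by simp
      next
        case False then show ?thesis using pp(1,2) by (auto simp: homs_def PiE_def extensional_def)
      qed
    qed
    show "p = p'" using 1 2 by (simp add: prod_eq_iff)
  qed
  have S: "h \<in> ?\<Psi> ` (homs G F \<times> homs G F')" if h: "h \<in> homs G (du F F' Il Ol)" for h
  proof -
    define h1 where "h1 = restrict (h \<circ> ev) ?V1"
    define h2 where "h2 = restrict (h \<circ> od) ?V2"
    have "h1 \<in> homs G F"
    proof -
      have "h1 ` e \<in> gedges G" if "e \<in> bedges F" for e
      proof -
        have "h1 ` e = h ` (ev ` e)" using EV1 that by (force simp: h1_def image_image)
        then show ?thesis using h that by (auto simp: homs_def)
      qed
      then show ?thesis using h by (auto simp: homs_def h1_def PiE_def Pi_def)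
    qed
    moreover have "h2 \<in> homs G F'"
    proof -
      have "h2 ` e \<in> gedges G" if "e \<in> bedges F'" for e
      proof -
        have "h2 ` e = h ` (od ` e)" using EV2 that by (force simp: h2_def image_image)
        then show ?thesis using h that by (auto simp: homs_def)
      qed
      then show ?thesis using h by (auto simp: homs_def h2_def PiE_def Pi_def)
    qed
    moreover have "?\<Psi> (h1, h2) = h"
    proof
      fix v show "?\<Psi> (h1, h2) v = h v"
        using h by (auto simp: Psi_def h1_def h2_def homs_def PiE_def extensional_def)
    qed
    ultimately show ?thesis by force
  qed
  show ?thesis unfolding bij_betw_def using A I S by blast
qed

lemma du_edges: "\<forall>e\<in>bedges F. e \<subseteq> bverts F \<Longrightarrow> \<forall>e\<in>bedges F'. e \<subseteq> bverts F' \<Longrightarrow>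
   \<forall>e\<in>bedges (du F F' Il Ol). e \<subseteq> bverts (du F F' Il Ol)"
  unfolding du_simps by (metis (no_types, lifting) Un_iff image_iff image_mono le_supI1 le_supI2)

lemma ball_prod_cong: "(\<And>a b. (a, b) \<in> S \<Longrightarrow> X a b \<longleftrightarrow> Y a b) \<Longrightarrow>
  (\<forall>(a,b)\<in>S. X a b) \<longleftrightarrow> (\<forall>(a,b)\<in>S. Y a b)"
  by auto

lemma zip_all_map:
  "length xs = length ys \<Longrightarrow> (\<forall>(a,b)\<in>set (zip xs ys). f a = g b) \<longleftrightarrow> map f xs = map g ys"
  by (induction xs ys rule: list_induct2) auto

lemma homv_TT: "h \<in> homs G F \<Longrightarrow> bwf k F \<Longrightarrow> map h (lab F) \<in> TT k G"
  by (auto simp: homs_def TT_def bwf_def lab_def PiE_def Pi_def)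

definition sc :: "nat \<Rightarrow> 'a list \<Rightarrow> 'a list \<Rightarrow> 'a list \<Rightarrow> bool" where
  "sc k x1 x2 x \<longleftrightarrow> drop k x1 = take k x2 \<and> take k x1 @ drop k x2 = x"

definition pc :: "'a list \<Rightarrow> 'a list \<Rightarrow> 'a list \<Rightarrow> bool" where
  "pc x1 x2 x \<longleftrightarrow> x1 = x \<and> x2 = x"

definition permc :: "nat \<Rightarrow> (nat \<Rightarrow> nat) \<Rightarrow> 'a list \<Rightarrow> 'a list \<Rightarrow> bool" where
  "permc k \<sigma> x y \<longleftrightarrow> map (\<lambda>i. x ! \<sigma> i) [0..<2*k] = y"

lemma finite_TT: "finite (gverts G) \<Longrightarrow> finite (TT k G)"
  unfolding TT_def by (rule finite_lists_length_eq)

lemma homv_bil: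
  assumes wf1: "bwf k F" and wf2: "bwf k F'" and fin: "finite (gverts G)"
    and eq: "\<And>h1 h2. h1 \<in> homs G F \<Longrightarrow> h2 \<in> homs G F' \<Longrightarrow>
        C (Psi (bverts F) (bverts F') (h1, h2)) \<longleftrightarrow> cc (map h1 (lab F)) (map h2 (lab F'))"
  shows "card {h\<in>homs G (du F F' Il Ol). C h} =
    (\<Sum>x1\<in>TT k G. \<Sum>x2\<in>TT k G. if cc x1 x2 then homv G F x1 * homv G F' x2 else 0)"
proof -
  have "card {h\<in>homs G (du F F' Il Ol). C h} = card {p\<in>homs G F \<times> homs G F'. C (Psi (bverts F) (bverts F') p)}"
    using du_bij[of F F' G Il Ol] wf1 wf2 by (intro card_filter_bij[symmetric]) (auto simp: bwf_def)
  also have "\<dots> = card {p\<in>homs G F \<times> homs G F'. cc (map (fst p) (lab F)) (map (snd p) (lab F'))}"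
    using eq by (intro arg_cong[where f=card]) auto
  also have "\<dots> = (\<Sum>x1\<in>TT k G. \<Sum>x2\<in>TT k G. if cc x1 x2 then homv G F x1 * homv G F' x2 else 0)"
    unfolding homv_def
    by (rule card_fiber2[of "homs G F" "homs G F'" "\<lambda>h. map h (lab F)" "TT k G" "\<lambda>h. map h (lab F')" "TT k G" cc])
      (use wf1 wf2 fin in \<open>auto simp: finite_homs bwf_def finite_TT intro: homv_TT\<close>)
  finally show ?thesis .
qed

lemma homv_series:
  assumes wf1: "bwf k F" and wf2: "bwf k F'" and fin: "finite (gverts G)"
  shows "homv G (series F F') x =
    (\<Sum>x1\<in>TT k G. \<Sum>x2\<in>TT k G. if sc k x1 x2 x then homv G F x1 * homv G F' x2 else 0)"
proof -
  let ?Ps = "set (zip (map ev (outl F)) (map od (inl F')))"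
  let ?B = "du F F' (map ev (inl F)) (map od (outl F'))"
  have Ps: "?Ps = (\<lambda>(a,b). (ev a, od b)) ` set (zip (outl F) (inl F'))"
    by (simp add: zip_map_map)
  have "homv G (series F F') x = card {h\<in>homs G ?B. (\<forall>(a,b)\<in>?Ps. h a = h b) \<and> map h (lab ?B) = x}"
    unfolding series_du
    apply (rule glue_homv)
    using wf1 wf2 du_edges[of F F'] by (auto simp: bwf_def lab_def Ps dest: set_zip_leftD set_zip_rightD)
  also have "\<dots> = (\<Sum>x1\<in>TT k G. \<Sum>x2\<in>TT k G. if sc k x1 x2 x then homv G F x1 * homv G F' x2 else 0)"
  proof (rule homv_bil[OF wf1 wf2 fin])
    fix h1 h2 assume h: "h1 \<in> homs G F" "h2 \<in> homs G F'"
    let ?p = "Psi (bverts F) (bverts F') (h1, h2)"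
    have "(\<forall>(a,b)\<in>?Ps. ?p a = ?p b) \<longleftrightarrow> (\<forall>(a,b)\<in>set (zip (outl F) (inl F')). ?p (ev a) = ?p (od b))"
      unfolding Ps by auto
    also have "\<dots> \<longleftrightarrow> (\<forall>(a,b)\<in>set (zip (outl F) (inl F')). h1 a = h2 b)"
    proof (rule ball_prod_cong)
      fix a b assume "(a, b) \<in> set (zip (outl F) (inl F'))"
      then have "a \<in> bverts F" "b \<in> bverts F'" using wf1 wf2 unfolding bwf_def
        by (blast dest: set_zip_leftD set_zip_rightD)+
      then show "?p (ev a) = ?p (od b) \<longleftrightarrow> h1 a = h2 b" by simp
    qed
    also have "\<dots> \<longleftrightarrow> map h1 (outl F) = map h2 (inl F')"
      using wf1 wf2 by (intro zip_all_map) (simp add: bwf_def)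
    finally have 1: "(\<forall>(a,b)\<in>?Ps. ?p a = ?p b) \<longleftrightarrow> map h1 (outl F) = map h2 (inl F')" .
    have 2: "map ?p (lab ?B) = map h1 (inl F) @ map h2 (outl F')"
      using wf1 wf2 by (auto simp: lab_def bwf_def)
    show "((\<forall>(a,b)\<in>?Ps. ?p a = ?p b) \<and> map ?p (lab ?B) = x) \<longleftrightarrow>
       sc k (map h1 (lab F)) (map h2 (lab F')) x"
      unfolding 1 2 using wf1 wf2 by (simp add: sc_def lab_def bwf_def)
  qed
  finally show ?thesis .
qed


lemma homv_parallel:
  assumes wf1: "bwf k F" and wf2: "bwf k F'" and fin: "finite (gverts G)"
  shows "homv G (parallel F F') x =
    (\<Sum>x1\<in>TT k G. \<Sum>x2\<in>TT k G. if pc x1 x2 x then homv G F x1 * homv G F' x2 else 0)"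
proof -
  let ?Ps1 = "set (zip (map ev (inl F)) (map od (inl F')))"
  let ?Ps2 = "set (zip (map ev (outl F)) (map od (outl F')))"
  let ?Ps = "?Ps1 \<union> ?Ps2"
  let ?B = "du F F' (map ev (inl F)) (map ev (outl F))"
  have Ps1: "?Ps1 = (\<lambda>(a,b). (ev a, od b)) ` set (zip (inl F) (inl F'))"
    by (simp add: zip_map_map)
  have Ps2: "?Ps2 = (\<lambda>(a,b). (ev a, od b)) ` set (zip (outl F) (outl F'))"
    by (simp add: zip_map_map)
  have "homv G (parallel F F') x = card {h\<in>homs G ?B. (\<forall>(a,b)\<in>?Ps. h a = h b) \<and> map h (lab ?B) = x}"
    unfolding parallel_du
    apply (rule glue_homv)
    using wf1 wf2 du_edges[of F F'] by (auto simp: bwf_def lab_def Ps1 Ps2 dest: set_zip_leftD set_zip_rightD)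
  also have "\<dots> = (\<Sum>x1\<in>TT k G. \<Sum>x2\<in>TT k G. if pc x1 x2 x then homv G F x1 * homv G F' x2 else 0)"
  proof (rule homv_bil[OF wf1 wf2 fin])
    fix h1 h2 assume h: "h1 \<in> homs G F" "h2 \<in> homs G F'"
    let ?p = "Psi (bverts F) (bverts F') (h1, h2)"
    have "(\<forall>(a,b)\<in>?Ps1. ?p a = ?p b) \<longleftrightarrow> (\<forall>(a,b)\<in>set (zip (inl F) (inl F')). ?p (ev a) = ?p (od b))"
      unfolding Ps1 by auto
    also have "\<dots> \<longleftrightarrow> (\<forall>(a,b)\<in>set (zip (inl F) (inl F')). h1 a = h2 b)"
    proof (rule ball_prod_cong)
      fix a b assume "(a, b) \<in> set (zip (inl F) (inl F'))"
      then have "a \<in> bverts F" "b \<in> bverts F'" using wf1 wf2 unfolding bwf_def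
        by (blast dest: set_zip_leftD set_zip_rightD)+
      then show "?p (ev a) = ?p (od b) \<longleftrightarrow> h1 a = h2 b" by simp
    qed
    also have "\<dots> \<longleftrightarrow> map h1 (inl F) = map h2 (inl F')"
      using wf1 wf2 by (intro zip_all_map) (simp add: bwf_def)
    finally have 1: "(\<forall>(a,b)\<in>?Ps1. ?p a = ?p b) \<longleftrightarrow> map h1 (inl F) = map h2 (inl F')" .
    have "(\<forall>(a,b)\<in>?Ps2. ?p a = ?p b) \<longleftrightarrow> (\<forall>(a,b)\<in>set (zip (outl F) (outl F')). ?p (ev a) = ?p (od b))"
      unfolding Ps2 by auto
    also have "\<dots> \<longleftrightarrow> (\<forall>(a,b)\<in>set (zip (outl F) (outl F')). h1 a = h2 b)"
    proof (rule ball_prod_cong)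
      fix a b assume "(a, b) \<in> set (zip (outl F) (outl F'))"
      then have "a \<in> bverts F" "b \<in> bverts F'" using wf1 wf2 unfolding bwf_def
        by (blast dest: set_zip_leftD set_zip_rightD)+
      then show "?p (ev a) = ?p (od b) \<longleftrightarrow> h1 a = h2 b" by simp
    qed
    also have "\<dots> \<longleftrightarrow> map h1 (outl F) = map h2 (outl F')"
      using wf1 wf2 by (intro zip_all_map) (simp add: bwf_def)
    finally have 2: "(\<forall>(a,b)\<in>?Ps2. ?p a = ?p b) \<longleftrightarrow> map h1 (outl F) = map h2 (outl F')" .
    have 3: "(\<forall>(a,b)\<in>?Ps. ?p a = ?p b) \<longleftrightarrow> (\<forall>(a,b)\<in>?Ps1. ?p a = ?p b) \<and> (\<forall>(a,b)\<in>?Ps2. ?p a = ?p b)"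
      by blast
    have 4: "map ?p (lab ?B) = map h1 (inl F) @ map h1 (outl F)"
      using wf1 wf2 by (auto simp: lab_def bwf_def)
    have 5: "map h1 (lab F) = map h2 (lab F') \<longleftrightarrow> map h1 (inl F) = map h2 (inl F') \<and> map h1 (outl F) = map h2 (outl F')"
      using wf1 wf2 by (simp add: lab_def bwf_def)
    show "((\<forall>(a,b)\<in>?Ps. ?p a = ?p b) \<and> map ?p (lab ?B) = x) \<longleftrightarrow>
       pc (map h1 (lab F)) (map h2 (lab F')) x"
      unfolding 3 1 2 4 pc_def using 5 by (auto simp: lab_def)
  qed
  finally show ?thesis .
qed

lemma perm_simps[simp]: "bverts (perm_labels k \<sigma> F) = bverts F" "bedges (perm_labels k \<sigma> F) = bedges F"
  "inl (perm_labels k \<sigma> F) = map (\<lambda>i. (inl F @ outl F) ! \<sigma> i) [0..<k]"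
  "outl (perm_labels k \<sigma> F) = map (\<lambda>i. (inl F @ outl F) ! \<sigma> i) [k..<2*k]"
  by (simp_all add: perm_labels_def Let_def)

lemma homs_perm[simp]: "homs G (perm_labels k \<sigma> F) = homs G F"
  by (simp add: homs_def)

lemma lab_perm: "lab (perm_labels k \<sigma> F) = map (\<lambda>i. lab F ! \<sigma> i) [0..<2*k]"
proof -
  have "[0..<2*k] = [0..<k] @ [k..<2*k]" using upt_add_eq_append[of 0 k k] by (simp add: mult_2)
  then show ?thesis by (simp add: lab_def)
qed

lemma homv_perm:
  assumes wf1: "bwf k F" and fin: "finite (gverts G)" and sig: "\<forall>i<2*k. \<sigma> i < 2*k"
  shows "homv G (perm_labels k \<sigma> F) y = (\<Sum>x\<in>TT k G. if permc k \<sigma> x y then homv G F x else 0)"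
proof -
  have len: "length (lab F) = 2*k" using wf1 by (simp add: bwf_def lab_def)
  have "homv G (perm_labels k \<sigma> F) y = card {h\<in>homs G F. permc k \<sigma> (map h (lab F)) y}"
    unfolding homv_def homs_perm lab_perm permc_def
    using sig len by (intro arg_cong[where f=card]) auto
  also have "\<dots> = (\<Sum>x\<in>TT k G. if permc k \<sigma> x y then homv G F x else 0)"
    unfolding homv_def
    by (rule card_fiber) (use wf1 fin in \<open>auto simp: finite_homs bwf_def finite_TT intro: homv_TT\<close>)
  finally show ?thesis .
qed


lemma bwf_bmap: "bwf k B \<Longrightarrow> bwf k (bmap q B)"
  by (auto simp: bwf_def)

lemma card_bmap: "finite (bverts B) \<Longrightarrow> card (bverts (bmap q B)) \<le> card (bverts B)"
  by (simp add: card_image_le)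

lemma bwf_du: "bwf k F \<Longrightarrow> bwf k F' \<Longrightarrow> length Il = k \<Longrightarrow> length Ol = k \<Longrightarrow>
   set Il \<subseteq> bverts (du F F' Il Ol) \<Longrightarrow> set Ol \<subseteq> bverts (du F F' Il Ol) \<Longrightarrow> bwf k (du F F' Il Ol)"
  using du_edges[of F F' Il Ol] unfolding bwf_def by simp

lemma card_du: "finite (bverts F) \<Longrightarrow> finite (bverts F') \<Longrightarrow>
   card (bverts (du F F' Il Ol)) \<le> card (bverts F) + card (bverts F')"
proof -
  assume f: "finite (bverts F)" "finite (bverts F')"
  have "card (ev ` bverts F \<union> od ` bverts F') \<le> card (ev ` bverts F) + card (od ` bverts F')"
    by (rule card_Un_le)
  also have "\<dots> \<le> card (bverts F) + card (bverts F')"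
    using f by (intro add_mono card_image_le) auto
  finally show ?thesis by simp
qed

lemma bwf_series: assumes "bwf k F" "bwf k F'" shows "bwf k (series F F')"
  unfolding series_du glue_eq
  by (rule bwf_bmap, rule bwf_du) (use assms in \<open>auto simp: bwf_def\<close>)

lemma card_series: assumes "bwf k F" "bwf k F'"
  shows "card (bverts (series F F')) \<le> card (bverts F) + card (bverts F')"
proof -
  have "card (bverts (series F F')) \<le> card (bverts (du F F' (map ev (inl F)) (map od (outl F'))))"
    unfolding series_du glue_eq using assms by (intro card_bmap) (auto simp: bwf_def)
  also have "\<dots> \<le> card (bverts F) + card (bverts F')" using assms by (intro card_du) (auto simp: bwf_def)
  finally show ?thesis .
qed

lemma bwf_parallel: assumes "bwf k F" "bwf k F'" shows "bwf k (parallel F F')"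
  unfolding parallel_du glue_eq
  by (rule bwf_bmap, rule bwf_du) (use assms in \<open>auto simp: bwf_def\<close>)

lemma card_parallel: assumes "bwf k F" "bwf k F'"
  shows "card (bverts (parallel F F')) \<le> card (bverts F) + card (bverts F')"
proof -
  have "card (bverts (parallel F F')) \<le> card (bverts (du F F' (map ev (inl F)) (map ev (outl F))))"
    unfolding parallel_du glue_eq using assms by (intro card_bmap) (auto simp: bwf_def)
  also have "\<dots> \<le> card (bverts F) + card (bverts F')" using assms by (intro card_du) (auto simp: bwf_def)
  finally show ?thesis .
qed

lemma bwf_perm: assumes "bwf k F" "\<forall>i<2*k. \<sigma> i < 2*k" shows "bwf k (perm_labels k \<sigma> F)"
proof -
  have len: "length (inl F @ outl F) = 2*k" using assms by (simp add: bwf_def)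
  have sub: "set (inl F @ outl F) \<subseteq> bverts F" using assms by (simp add: bwf_def)
  have "(inl F @ outl F) ! \<sigma> i \<in> bverts F" if "i < 2*k" for i
    using sub nth_mem[of "\<sigma> i" "inl F @ outl F"] len assms(2) that by auto
  then show ?thesis using assms(1) unfolding bwf_def by auto
qed

lemma rot_lt: assumes "k \<ge> 1" shows "rot k r i < 2*k"
proof -
  have l: "length (cyc k) = 2*k" by (simp add: cyc_def)
  have m: "(cyc_pos k i + r) mod (2*k) < 2*k" using assms by simp
  have "cyc k ! ((cyc_pos k i + r) mod (2*k)) \<in> set (cyc k)" using m l by simp
  moreover have "set (cyc k) \<subseteq> {0..<2*k}" by (auto simp: cyc_def)
  ultimately show ?thesis unfolding rot_def by auto
qed

lemma Ck_lt: "k \<ge> 1 \<Longrightarrow> \<sigma> \<in> Ck_group k \<Longrightarrow> \<forall>i<2*k. \<sigma> i < 2*k"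
  unfolding Ck_group_def using rot_lt by auto

lemma minor_step_wf:
  assumes "minor_step F F'" "bwf k F"
  shows "bwf k F' \<and> card (bverts F') \<le> card (bverts F)"
  using assms
proof (induction rule: minor_step.induct)
  case (edge_del e F)
  then show ?case by (auto simp: bwf_def)
next
  case (edge_contr a b F)
  let ?F = "F\<lparr>bedges := bedges F - {{a, b}}\<rparr>"
  let ?q = "\<lambda>x. if x = b then a else x"
  have w0: "bwf k ?F" using edge_contr by (auto simp: bwf_def)
  have w: "bwf k (bmap ?q ?F)" by (rule bwf_bmap) (fact w0)
  have "finite (bverts ?F)" using w0 by (simp add: bwf_def)
  then have c: "card (bverts (bmap ?q ?F)) \<le> card (bverts F)" using card_bmap[of ?F ?q] by simp
  show ?case using w c by (rule conjI)
next
  case (vert_del x F)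
  then show ?case by (auto simp: bwf_def intro: card_mono)
qed

lemma bminor_wf:
  assumes "bminor F M" "bwf k M"
  shows "bwf k F \<and> card (bverts F) \<le> card (bverts M)"
  using assms(1) unfolding bminor_def
proof (induction rule: rtranclp_induct)
  case base then show ?case using assms(2) by simp
next
  case (step y z)
  then show ?case using minor_step_wf[of y z k] by auto
qed

lemma bwf_Ck: "k \<ge> 1 \<Longrightarrow> bwf k (Ck k)"
  unfolding bwf_def Ck_def by auto

lemma bwf_Mk: "k \<ge> 1 \<Longrightarrow> bwf k (Mk k)"
  unfolding bwf_def Mk_def by auto

lemma Q_wf: assumes "k \<ge> 1" "F \<in> Q k" shows "bwf k F \<and> card (bverts F) \<le> 2*k"
proof -
  have c1: "card (bverts (Ck k)) = 2*k" by (simp add: Ck_def)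
  have c2: "card (bverts (Mk k)) = 2*k" by (simp add: Mk_def)
  show ?thesis using assms bminor_wf[OF _ bwf_Ck[OF assms(1)], of F] bminor_wf[OF _ bwf_Mk[OF assms(1)], of F] c1 c2
    by (auto simp: Q_def QP_def QS_def)
qed

lemma P_wf: assumes "k \<ge> 1" "F \<in> P k" shows "bwf k F"
  using assms(2)
proof (induction rule: P.induct)
  case (base F) then show ?case using Q_wf[OF assms(1)] by blast
next
  case (ser F F') then show ?case using bwf_series by blast
next
  case (par F R) then show ?case using Q_wf[OF assms(1), of R] by (auto simp: Q_def intro: bwf_parallel)
next
  case (perm F \<sigma>) then show ?case using Ck_lt[OF assms(1)] by (auto intro: bwf_perm)
qed

fun Pd :: "nat \<Rightarrow> nat \<Rightarrow> bgraph set" where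
  "Pd k 0 = Q k"
| "Pd k (Suc d) = Pd k d \<union> {series F F' | F F'. F \<in> Pd k d \<and> F' \<in> Pd k d}
     \<union> {parallel F R | F R. F \<in> Pd k d \<and> R \<in> QP k}
     \<union> {perm_labels k \<sigma> F | \<sigma> F. F \<in> Pd k d \<and> \<sigma> \<in> Ck_group k}"

lemma Pd_sub: "Pd k d \<subseteq> P k"
proof (induction d)
  case 0 then show ?case by (auto intro: P.base)
next
  case (Suc d) then show ?case by (auto intro: P.ser P.par P.perm)
qed

lemma Pd_mono: "d \<le> d' \<Longrightarrow> Pd k d \<subseteq> Pd k d'"
  by (induction d' rule: dec_induct) auto

lemma Pd_card: assumes "k \<ge> 1" "F \<in> Pd k d" shows "card (bverts F) \<le> 2*k*2^d"
  using assms(2)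
proof (induction d arbitrary: F)
  case 0 then show ?case using Q_wf[OF assms(1)] by auto
next
  case (Suc d)
  have wfd: "bwf k F" if "F \<in> Pd k d" for F using P_wf[OF assms(1)] Pd_sub that by blast
  have b: "2*k*2^d \<le> 2*k*2^Suc d" by simp
  from Suc.prems consider "F \<in> Pd k d" | F1 F2 where "F = series F1 F2" "F1 \<in> Pd k d" "F2 \<in> Pd k d"
    | F1 R where "F = parallel F1 R" "F1 \<in> Pd k d" "R \<in> QP k"
    | \<sigma> F1 where "F = perm_labels k \<sigma> F1" "F1 \<in> Pd k d" by auto
  then show ?case
  proof cases
    case 1 then show ?thesis using Suc.IH b by fastforce
  next
    case 2
    then have "card (bverts F) \<le> card (bverts F1) + card (bverts F2)" using card_series wfd by blast
    then show ?thesis using Suc.IH[OF 2(2)] Suc.IH[OF 2(3)] by simp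
  next
    case 3
    have R: "bwf k R \<and> card (bverts R) \<le> 2*k" using Q_wf[OF assms(1), of R] 3 by (auto simp: Q_def)
    then have "card (bverts F) \<le> card (bverts F1) + card (bverts R)" using card_parallel wfd 3 by blast
    moreover have "2*k \<le> 2*k*2^d" by simp
    ultimately have "card (bverts F) \<le> 2*k*2^d + 2*k*2^d" using Suc.IH[OF 3(2)] R by linarith
    also have "\<dots> = 2*k*2^Suc d" by simp
    finally show ?thesis .
  next
    case 4 then show ?thesis using Suc.IH[OF 4(2)] b by simp
  qed
qed


context vector_space begin

lemma dim_strict:
  assumes ST: "S \<subseteq> T" and TW: "T \<subseteq> span W" and fW: "finite W" and ne: "span S \<noteq> span T"
  shows "dim S < dim T"
proof -
  obtain B where B: "B \<subseteq> S" "independent B" "S \<subseteq> span B" "card B = dim S"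
    by (rule basis_exists)
  have "\<not> T \<subseteq> span S"
  proof
    assume "T \<subseteq> span S"
    then have "span T \<subseteq> span S" by (rule span_minimal) simp
    moreover have "span S \<subseteq> span T" using ST by (rule span_mono)
    ultimately have "span S = span T" by (intro equalityI)
    with ne show False by (rule notE)
  qed
  then obtain t where t: "t \<in> T" "t \<notin> span S" by (auto simp only: subset_iff)
  have spB: "span B = span S"
  proof
    show "span B \<subseteq> span S" using B(1) by (rule span_mono)
    show "span S \<subseteq> span B" using B(3) by (rule span_minimal) simp
  qed
  have tB: "t \<notin> span B" using t(2) spB by simp
  have ind: "independent (insert t B)" using B(2) tB by (simp add: independent_insert)
  have sub: "insert t B \<subseteq> T" using B(1) ST t(1) by (simp add: subset_trans)
  obtain C where C: "C \<subseteq> T" "independent C" "T \<subseteq> span C" "card C = dim T"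
    by (rule basis_exists)
  have "C \<subseteq> span W" using C(1) TW by (rule subset_trans)
  then have fC: "finite C" using independent_span_bound[OF fW C(2)] by simp
  have "insert t B \<subseteq> span C" using sub C(3) by (rule subset_trans)
  then have fi: "finite (insert t B) \<and> card (insert t B) \<le> card C"
    using independent_span_bound[OF fC ind] by simp
  have "t \<notin> B" using tB span_base by metis
  then have "card (insert t B) = Suc (card B)" using fi by simp
  then show ?thesis using fi B(4) C(4) by simp
qed


lemma chain_stab:
  assumes mono: "\<And>d. S d \<subseteq> S (Suc d)" and sub: "\<And>d. S d \<subseteq> span W" and fW: "finite W"
    and cW: "card W \<le> N"
  shows "\<exists>d\<le>N. span (S d) = span (S (Suc d))"
proof (rule ccontr)
  assume nt: "\<not> (\<exists>d\<le>N. span (S d) = span (S (Suc d)))"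
  have lt: "dim (S d) < dim (S (Suc d))" if "d \<le> N" for d
  proof (rule dim_strict[OF mono sub fW])
    show "span (S d) \<noteq> span (S (Suc d))" using nt that by blast
  qed
  have "d \<le> dim (S d)" if "d \<le> Suc N" for d
    using that
  proof (induction d)
    case 0 then show ?case by simp
  next
    case (Suc d)
    then have "d \<le> N" by simp
    then have "dim (S d) < dim (S (Suc d))" by (rule lt)
    moreover have "d \<le> dim (S d)" using Suc by simp
    ultimately show ?case by simp
  qed
  then have "Suc N \<le> dim (S (Suc N))" by simp
  moreover have "dim (S (Suc N)) \<le> card W" by (rule dim_le_card[OF sub fW])
  ultimately show False using cW by simp
qed

end

definition scl :: "real \<Rightarrow> ('s \<Rightarrow> real) \<Rightarrow> 's \<Rightarrow> real" where
  "scl c f = (\<lambda>x. c * f x)"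

lemma fvs_ax: "vector_space scl"
  unfolding vector_space_def scl_def by (simp add: fun_eq_iff algebra_simps)

interpretation fvs: vector_space scl
  by (rule fvs_ax)


type_synonym ('a, 'b) vc = "('a list + 'b list) \<Rightarrow> real"

definition vec :: "'a sgraph \<Rightarrow> 'b sgraph \<Rightarrow> bgraph \<Rightarrow> ('a, 'b) vc" where
  "vec G H F = (\<lambda>s. case s of Inl x \<Rightarrow> real (homv G F x) | Inr y \<Rightarrow> real (homv H F y))"

definition bil :: "nat \<Rightarrow> 'a sgraph \<Rightarrow> 'b sgraph \<Rightarrow> ('a list \<Rightarrow> 'a list \<Rightarrow> 'a list \<Rightarrow> bool) \<Rightarrow>
   ('b list \<Rightarrow> 'b list \<Rightarrow> 'b list \<Rightarrow> bool) \<Rightarrow> ('a, 'b) vc \<Rightarrow> ('a, 'b) vc \<Rightarrow> ('a, 'b) vc" where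
  "bil k G H cG cH v w = (\<lambda>s. case s of
      Inl x \<Rightarrow> (\<Sum>x1\<in>TT k G. \<Sum>x2\<in>TT k G. if cG x1 x2 x then v (Inl x1) * w (Inl x2) else 0)
    | Inr y \<Rightarrow> (\<Sum>x1\<in>TT k H. \<Sum>x2\<in>TT k H. if cH x1 x2 y then v (Inr x1) * w (Inr x2) else 0))"

definition lin :: "nat \<Rightarrow> 'a sgraph \<Rightarrow> 'b sgraph \<Rightarrow> ('a list \<Rightarrow> 'a list \<Rightarrow> bool) \<Rightarrow>
   ('b list \<Rightarrow> 'b list \<Rightarrow> bool) \<Rightarrow> ('a, 'b) vc \<Rightarrow> ('a, 'b) vc" where
  "lin k G H cG cH v = (\<lambda>s. case s of
      Inl x \<Rightarrow> (\<Sum>x1\<in>TT k G. if cG x1 x then v (Inl x1) else 0)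
    | Inr y \<Rightarrow> (\<Sum>x1\<in>TT k H. if cH x1 y then v (Inr x1) else 0))"

definition Lf :: "nat \<Rightarrow> 'a sgraph \<Rightarrow> 'b sgraph \<Rightarrow> ('a, 'b) vc \<Rightarrow> real" where
  "Lf k G H v = (\<Sum>x\<in>TT k G. v (Inl x)) - (\<Sum>y\<in>TT k H. v (Inr y))"

lemma if_mult_distr: "(if c then (a * x + y) * w else 0) = a * (if c then x * w else 0) + (if c then y * w else (0::real))"
  by (simp add: algebra_simps)
lemma if_mult_distr2: "(if c then w * (a * x + y) else 0) = a * (if c then w * x else 0) + (if c then w * y else (0::real))"
  by (simp add: algebra_simps)
lemma if_distr1: "(if c then (a * x + y) else 0) = a * (if c then x else 0) + (if c then y else (0::real))"
  by (simp add: algebra_simps)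

lemma bil_left: "bil k G H cG cH (scl c v + v') w = scl c (bil k G H cG cH v w) + bil k G H cG cH v' w"
  unfolding bil_def scl_def
  by (auto simp: fun_eq_iff if_mult_distr sum.distrib sum_distrib_left split: sum.split cong: if_cong)

lemma bil_right: "bil k G H cG cH w (scl c v + v') = scl c (bil k G H cG cH w v) + bil k G H cG cH w v'"
  unfolding bil_def scl_def
  by (auto simp: fun_eq_iff if_mult_distr2 sum.distrib sum_distrib_left split: sum.split cong: if_cong)

lemma bil_zero1: "bil k G H cG cH 0 w = 0"
  unfolding bil_def by (auto simp: fun_eq_iff split: sum.split cong: if_cong)
lemma bil_zero2: "bil k G H cG cH w 0 = 0"
  unfolding bil_def by (auto simp: fun_eq_iff split: sum.split cong: if_cong)

lemma lin_add: "lin k G H cG cH (scl c v + v') = scl c (lin k G H cG cH v) + lin k G H cG cH v'"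
  unfolding lin_def scl_def
  by (auto simp: fun_eq_iff if_distr1 sum.distrib sum_distrib_left split: sum.split cong: if_cong)

lemma lin_zero: "lin k G H cG cH 0 = 0"
  unfolding lin_def by (auto simp: fun_eq_iff split: sum.split cong: if_cong)

lemma Lf_add: "Lf k G H (scl c v + v') = c * Lf k G H v + Lf k G H v'"
  unfolding Lf_def scl_def by (simp add: sum.distrib sum_distrib_left algebra_simps)

lemma Lf_zero: "Lf k G H 0 = 0"
  unfolding Lf_def by simp

lemma real_if0: "real (if c then a else 0) = (if c then real a else 0)" by simp

lemma vec_series:
  assumes "bwf k F" "bwf k F'" "finite (gverts G)" "finite (gverts H)"
  shows "vec G H (series F F') = bil k G H (sc k) (sc k) (vec G H F) (vec G H F')"
  unfolding vec_def bil_def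
  using homv_series[OF assms(1,2,3)] homv_series[OF assms(1,2,4)]
  by (auto simp: fun_eq_iff of_nat_sum real_if0 split: sum.split cong: if_cong)

lemma vec_parallel:
  assumes "bwf k F" "bwf k F'" "finite (gverts G)" "finite (gverts H)"
  shows "vec G H (parallel F F') = bil k G H pc pc (vec G H F) (vec G H F')"
  unfolding vec_def bil_def
  using homv_parallel[OF assms(1,2,3)] homv_parallel[OF assms(1,2,4)]
  by (auto simp: fun_eq_iff of_nat_sum real_if0 split: sum.split cong: if_cong)

lemma vec_perm:
  assumes "bwf k F" "finite (gverts G)" "finite (gverts H)" "\<forall>i<2*k. \<sigma> i < 2*k"
  shows "vec G H (perm_labels k \<sigma> F) = lin k G H (permc k \<sigma>) (permc k \<sigma>) (vec G H F)"
  unfolding vec_def lin_def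
  using homv_perm[OF assms(1,2,4)] homv_perm[OF assms(1,3,4)]
  by (auto simp: fun_eq_iff of_nat_sum real_if0 split: sum.split cong: if_cong)

lemma hom_sum:
  assumes "bwf k F" "finite (gverts G)"
  shows "hom (ug F) G = (\<Sum>x\<in>TT k G. homv G F x)"
proof -
  have "hom (ug F) G = card {h\<in>homs G F. (\<lambda>_. True) (map h (lab F))}"
    by (simp add: hom_def ug_def homs_def)
  also have "\<dots> = (\<Sum>x\<in>TT k G. if True then homv G F x else 0)"
    unfolding homv_def
    by (rule card_fiber) (use assms in \<open>auto simp: finite_homs bwf_def finite_TT intro: homv_TT\<close>)
  finally show ?thesis by simp
qed

lemma Lf_vec:
  assumes "bwf k F" "finite (gverts G)" "finite (gverts H)"
  shows "Lf k G H (vec G H F) = real (hom (ug F) G) - real (hom (ug F) H)"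
  unfolding Lf_def vec_def using hom_sum[OF assms(1,2)] hom_sum[OF assms(1,3)] by simp

definition dl :: "'s \<Rightarrow> 's \<Rightarrow> real" where "dl t = (\<lambda>s. if s = t then 1 else 0)"

lemma sum_fun_app: "finite A \<Longrightarrow> (sum f A) x = sum (\<lambda>a. f a x) A"
  by (induction A rule: finite_induct) auto

lemma supp_span:
  assumes "finite U" "\<And>s. s \<notin> U \<Longrightarrow> v s = 0"
  shows "v \<in> fvs.span (dl ` U)"
proof -
  have "v = (\<Sum>t\<in>U. scl (v t) (dl t))"
  proof
    fix s
    have "(\<Sum>t\<in>U. scl (v t) (dl t)) s = (\<Sum>t\<in>U. v t * dl t s)"
      using assms(1) by (simp add: sum_fun_app scl_def)
    also have "\<dots> = (\<Sum>t\<in>U. if t = s then v t else 0)"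
      by (rule sum.cong) (auto simp: dl_def)
    also have "\<dots> = v s"
      using assms by (simp add: sum.delta)
    finally show "v s = (\<Sum>t\<in>U. scl (v t) (dl t)) s" by simp
  qed
  also have "\<dots> \<in> fvs.span (dl ` U)"
    by (intro fvs.span_sum fvs.span_scale fvs.span_base) simp
  finally show ?thesis .
qed

definition UU :: "nat \<Rightarrow> 'a sgraph \<Rightarrow> 'b sgraph \<Rightarrow> ('a list + 'b list) set" where
  "UU k G H = Inl ` TT k G \<union> Inr ` TT k H"

lemma homv_out: assumes "bwf k F" "x \<notin> TT k G" shows "homv G F x = 0"
proof -
  have e: "{h \<in> homs G F. map h (lab F) = x} = {}" using homv_TT[of _ G F k] assms by blast
  show ?thesis by (simp only: homv_def e card.empty)
qed

lemma vec_span: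
  assumes "bwf k F" "finite (gverts G)" "finite (gverts H)"
  shows "vec G H F \<in> fvs.span (dl ` UU k G H)"
proof (rule supp_span)
  show "finite (UU k G H)" using assms by (simp add: UU_def finite_TT)
  fix s assume "s \<notin> UU k G H"
  then show "vec G H F s = 0"
  proof (cases s)
    case (Inl a)
    then have "a \<notin> TT k G" using \<open>s \<notin> UU k G H\<close> by (auto simp: UU_def)
    then show ?thesis using Inl homv_out[OF assms(1)] by (simp add: vec_def)
  next
    case (Inr a)
    then have "a \<notin> TT k H" using \<open>s \<notin> UU k G H\<close> by (auto simp: UU_def)
    then show ?thesis using Inr homv_out[OF assms(1)] by (simp add: vec_def)
  qed
qed

lemma card_UU:
  assumes "finite (gverts G)" "finite (gverts H)" "card (gverts G) \<le> n" "card (gverts H) \<le> n"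
  shows "card (dl ` UU k G H) \<le> 2 * n ^ (2*k)"
proof -
  have "card (dl ` UU k G H) \<le> card (UU k G H)" by (rule card_image_le) (simp add: UU_def finite_TT assms)
  also have "\<dots> \<le> card (Inl ` TT k G :: ('a list + 'b list) set) + card (Inr ` TT k H :: ('a list + 'b list) set)"
    unfolding UU_def by (rule card_Un_le)
  also have "\<dots> \<le> card (TT k G) + card (TT k H)" by (simp add: card_image)
  also have "\<dots> = card (gverts G) ^ (2*k) + card (gverts H) ^ (2*k)"
    unfolding TT_def by (simp add: card_lists_length_eq assms)
  also have "\<dots> \<le> n ^ (2*k) + n ^ (2*k)" using assms by (intro add_mono power_mono) auto
  finally show ?thesis by simp
qed


theorem theorem5p5:
  fixes k n :: nat and G :: "'a sgraph" and H :: "'b sgraph"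
  assumes "k \<ge> 1"
    and "simple_graph G" and "simple_graph H"
    and "card (gverts G) \<le> n" and "card (gverts H) \<le> n"
  shows "(\<forall>F\<in>P k. hom (ug F) G = hom (ug F) H) \<longleftrightarrow>
         (\<forall>F\<in>P k. card (gverts (ug F)) \<le> fk k n \<longrightarrow> hom (ug F) G = hom (ug F) H)"
proof
  assume "\<forall>F\<in>P k. hom (ug F) G = hom (ug F) H"
  then show "\<forall>F\<in>P k. card (gverts (ug F)) \<le> fk k n \<longrightarrow> hom (ug F) G = hom (ug F) H" by blast
next
  assume small: "\<forall>F\<in>P k. card (gverts (ug F)) \<le> fk k n \<longrightarrow> hom (ug F) G = hom (ug F) H"
  have k1: "k \<ge> 1" by fact
  have fG: "finite (gverts G)" using assms(2) by (simp add: simple_graph_def)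
  have fH: "finite (gverts H)" using assms(3) by (simp add: simple_graph_def)
  have wfP: "bwf k F" if "F \<in> P k" for F using P_wf[OF k1 that] .
  have wfD: "bwf k F" if "F \<in> Pd k d" for F d using wfP Pd_sub that by blast
  define Sd where "Sd d = vec G H ` Pd k d" for d
  define W where "W = dl ` UU k G H"
  have mono: "Sd d \<subseteq> Sd (Suc d)" for d unfolding Sd_def by (rule image_mono) auto
  have sub: "Sd d \<subseteq> fvs.span W" for d
    unfolding Sd_def W_def using vec_span[OF wfD fG fH] by blast
  have fW: "finite W" unfolding W_def UU_def using fG fH by (simp add: finite_TT)
  have cW: "card W \<le> 2 * n ^ (2*k)" unfolding W_def by (rule card_UU[OF fG fH assms(4,5)])
  obtain D where D: "D \<le> 2 * n ^ (2*k)" "fvs.span (Sd D) = fvs.span (Sd (Suc D))"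
    using fvs.chain_stab[of Sd W, OF mono sub fW cW] by blast
  define S where "S = fvs.span (Sd D)"
  have comb: "scl c a + b \<in> S" if "a \<in> S" "b \<in> S" for c a b
    using that unfolding S_def by (intro fvs.span_add fvs.span_scale)
  have inS: "vec G H F \<in> S" if "F \<in> Pd k D" for F
    unfolding S_def Sd_def by (rule fvs.span_base, rule imageI, rule that)
  have inS1: "vec G H F \<in> S" if "F \<in> Pd k (Suc D)" for F
  proof -
    have "vec G H F \<in> fvs.span (Sd (Suc D))" unfolding Sd_def by (rule fvs.span_base, rule imageI, rule that)
    then show ?thesis unfolding S_def using D(2) by simp
  qed
  have c2a: "bil k G H (sc k) (sc k) u (vec G H F') \<in> S" if u: "u \<in> S" and F': "F' \<in> Pd k D" for u F'
    using u[unfolded S_def]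
  proof (induction rule: fvs.span_induct_alt)
    case base then show ?case unfolding bil_zero1 S_def by (rule fvs.span_zero)
  next
    case (step c x y)
    then obtain F where F: "F \<in> Pd k D" "x = vec G H F" unfolding Sd_def by blast
    have "bil k G H (sc k) (sc k) x (vec G H F') = vec G H (series F F')"
      using vec_series[OF wfD[OF F(1)] wfD[OF F'] fG fH] F by simp
    also have "\<dots> \<in> S" using F F' by (intro inS1) auto
    finally have "bil k G H (sc k) (sc k) x (vec G H F') \<in> S" .
    then show ?case unfolding bil_left using step(2) by (intro comb)
  qed
  have c2: "bil k G H (sc k) (sc k) u w \<in> S" if u: "u \<in> S" and w: "w \<in> S" for u w
    using w[unfolded S_def]
  proof (induction rule: fvs.span_induct_alt)
    case base then show ?case unfolding bil_zero2 S_def by (rule fvs.span_zero)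
  next
    case (step c x y)
    then obtain F where F: "F \<in> Pd k D" "x = vec G H F" unfolding Sd_def by blast
    have "bil k G H (sc k) (sc k) u x \<in> S" using c2a[OF u F(1)] F(2) by simp
    then show ?case unfolding bil_right using step(2) by (intro comb)
  qed
  have c3: "bil k G H pc pc u (vec G H R) \<in> S" if u: "u \<in> S" and R: "R \<in> QP k" for u R
    using u[unfolded S_def]
  proof (induction rule: fvs.span_induct_alt)
    case base then show ?case unfolding bil_zero1 S_def by (rule fvs.span_zero)
  next
    case (step c x y)
    then obtain F where F: "F \<in> Pd k D" "x = vec G H F" unfolding Sd_def by blast
    have wR: "bwf k R" using R wfP P.base by (auto simp: Q_def)
    have "bil k G H pc pc x (vec G H R) = vec G H (parallel F R)"
      using vec_parallel[OF wfD[OF F(1)] wR fG fH] F by simp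
    also have "\<dots> \<in> S" using F R by (intro inS1) auto
    finally have "bil k G H pc pc x (vec G H R) \<in> S" .
    then show ?case unfolding bil_left using step(2) by (intro comb)
  qed
  have c4: "lin k G H (permc k \<sigma>) (permc k \<sigma>) u \<in> S" if u: "u \<in> S" and \<sigma>: "\<sigma> \<in> Ck_group k" for u \<sigma>
    using u[unfolded S_def]
  proof (induction rule: fvs.span_induct_alt)
    case base then show ?case unfolding lin_zero S_def by (rule fvs.span_zero)
  next
    case (step c x y)
    then obtain F where F: "F \<in> Pd k D" "x = vec G H F" unfolding Sd_def by blast
    have "lin k G H (permc k \<sigma>) (permc k \<sigma>) x = vec G H (perm_labels k \<sigma> F)"
      using vec_perm[OF wfD[OF F(1)] fG fH Ck_lt[OF k1 \<sigma>]] F by simp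
    also have "\<dots> \<in> S" using F \<sigma> by (intro inS1) auto
    finally have "lin k G H (permc k \<sigma>) (permc k \<sigma>) x \<in> S" .
    then show ?case unfolding lin_add using step(2) by (intro comb)
  qed
  have c5: "vec G H F \<in> S" if "F \<in> P k" for F
    using that
  proof (induction rule: P.induct)
    case (base F)
    then have "F \<in> Pd k D" using Pd_mono[of 0 D k] by auto
    then show ?case by (rule inS)
  next
    case (ser F F')
    then show ?case using vec_series[OF wfP[OF ser.hyps(1)] wfP[OF ser.hyps(2)] fG fH] c2[OF ser.IH(1) ser.IH(2)] by simp
  next
    case (par F R)
    have wR: "bwf k R" using par.hyps(2) wfP P.base by (auto simp: Q_def)
    show ?case using vec_parallel[OF wfP[OF par.hyps(1)] wR fG fH] c3[OF par.IH par.hyps(2)] by simp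
  next
    case (perm F \<sigma>)
    then show ?case using vec_perm[OF wfP[OF perm.hyps(1)] fG fH Ck_lt[OF k1 perm.hyps(2)]] c4[OF perm.IH perm.hyps(2)] by simp
  qed
  have bound: "2*k*2^D \<le> fk k n"
  proof -
    have "(2::nat)^D \<le> 2^(2 * n^(2*k))" using D(1) by (intro power_increasing) auto
    also have "\<dots> = 4^(n^(2*k))" by (simp add: power_mult)
    finally show ?thesis unfolding fk_def by simp
  qed
  have c6: "Lf k G H v = 0" if v: "v \<in> S" for v
    using v[unfolded S_def]
  proof (induction rule: fvs.span_induct_alt)
    case base then show ?case by (rule Lf_zero)
  next
    case (step c x y)
    then obtain F where F: "F \<in> Pd k D" "x = vec G H F" unfolding Sd_def by blast
    have FP: "F \<in> P k" using F(1) Pd_sub by blast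
    have "card (gverts (ug F)) \<le> fk k n"
      using Pd_card[OF k1 F(1)] bound by (simp add: ug_def)
    then have "hom (ug F) G = hom (ug F) H" using small FP by blast
    then have "Lf k G H x = 0" using Lf_vec[OF wfP[OF FP] fG fH] F(2) by simp
    then show ?case unfolding Lf_add using step(2) by simp
  qed
  show "\<forall>F\<in>P k. hom (ug F) G = hom (ug F) H"
  proof
    fix F assume F: "F \<in> P k"
    have "Lf k G H (vec G H F) = 0" using c6[OF c5[OF F]] .
    then show "hom (ug F) G = hom (ug F) H" using Lf_vec[OF wfP[OF F] fG fH] by simp
  qed
qed

end
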